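(* Let $n\ge2$ and $q=p^h$ with $p$ prime, $h\geq1$. Let $B$ be a minimal blocking set with respect to lines of $PG(n,q)$ such that every line meets $B$ in $1\pmod{p^e}$ points, where $e$ is the largest integer with this property. Assume $p^e>3$ and $\theta_{n-1}<|B|<2q^{n-1}$. Then $$|B|\leq q^{n-1}+\frac{2q^{n-1}}{p^e}.$$
   Context: $\theta_m=(q^{m+1}-1)/(q-1)$. A blocking set with respect to lines is a point set meeting every line. It is minimal if no proper subset is a blocking set. *)

theory Defs
  imports Complex_Main "HOL-Computational_Algebra.Primes" "HOL-Library.Cardinality"
begin

text \<open>Projective space PG(n,F) over a field F: vectors of F^(n+1) are modelled as
  functions nat => F vanishing outside {0..n}.\<close>

definition pg_vecs :: "nat \<Rightarrow> (nat \<Rightarrow> 'a::field) set" where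
  "pg_vecs n = {v. \<forall>i>n. v i = 0}"

definition pg_points :: "nat \<Rightarrow> (nat \<Rightarrow> 'a::field) set set" where
  "pg_points n = {{(\<lambda>i. c * v i) | c. True} | v. v \<in> pg_vecs n \<and> v \<noteq> (\<lambda>i. 0)}"

definition pg_lines :: "nat \<Rightarrow> (nat \<Rightarrow> 'a::field) set set" where
  "pg_lines n = {{(\<lambda>i. a * u i + b * w i) | a b. True} | u w.
      u \<in> pg_vecs n \<and> w \<in> pg_vecs n \<and> u \<noteq> (\<lambda>i. 0) \<and> (\<forall>c. w \<noteq> (\<lambda>i. c * u i))}"

definition blocking_set :: "nat \<Rightarrow> (nat \<Rightarrow> 'a::field) set set \<Rightarrow> bool" where
  "blocking_set n B \<longleftrightarrow> B \<subseteq> pg_points n \<and> (\<forall>L\<in>pg_lines n. \<exists>P\<in>B. P \<subseteq> L)"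

definition minimal_blocking_set :: "nat \<Rightarrow> (nat \<Rightarrow> 'a::field) set set \<Rightarrow> bool" where
  "minimal_blocking_set n B \<longleftrightarrow> blocking_set n B \<and> (\<forall>B'. B' \<subset> B \<longrightarrow> \<not> blocking_set n B')"

definition lines_meet_one_mod :: "nat \<Rightarrow> (nat \<Rightarrow> 'a::field) set set \<Rightarrow> nat \<Rightarrow> bool" where
  "lines_meet_one_mod n B m \<longleftrightarrow> (\<forall>L\<in>pg_lines n. card {P\<in>B. P \<subseteq> L} mod m = 1 mod m)"

end

theory Submission
  imports Defs "HOL-Library.FuncSet"
begin


definition pt :: "(nat \<Rightarrow> 'a::field) \<Rightarrow> (nat \<Rightarrow> 'a) set" where
  "pt v = {(\<lambda>i. c * v i) | c. True}"
definition lin :: "(nat \<Rightarrow> 'a::field) \<Rightarrow> (nat \<Rightarrow> 'a) \<Rightarrow> (nat \<Rightarrow> 'a) set" where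
  "lin u w = {(\<lambda>i. a * u i + b * w i) | a b. True}"
definition indep :: "(nat \<Rightarrow> 'a::field) \<Rightarrow> (nat \<Rightarrow> 'a) \<Rightarrow> bool" where
  "indep u w \<longleftrightarrow> u \<noteq> (\<lambda>i. 0) \<and> (\<forall>c. w \<noteq> (\<lambda>i. c * u i))"

lemma pg_points_alt: "pg_points n = {pt v | v. v \<in> pg_vecs n \<and> v \<noteq> (\<lambda>i. 0)}"
  by (simp add: pg_points_def pt_def)
lemma pg_lines_alt: "pg_lines n = {lin u w | u w. u \<in> pg_vecs n \<and> w \<in> pg_vecs n \<and> indep u w}"
  by (simp add: pg_lines_def lin_def indep_def)

lemma indep_lin:
  assumes "indep u w" "(\<lambda>i. a * u i + b * w i) = (\<lambda>i. 0)"
  shows "a = 0 \<and> b = 0"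
proof -
  have b: "b = 0"
  proof (rule ccontr)
    assume "b \<noteq> 0"
    have "w = (\<lambda>i. (- a / b) * u i)"
    proof
      fix i have "a * u i + b * w i = 0" using assms(2) by (simp add: fun_eq_iff)
      then show "w i = (- a / b) * u i" using \<open>b \<noteq> 0\<close> by (simp add: field_simps) (metis add.commute add_eq_0_iff2 mult.commute)
    qed
    then show False using assms(1) unfolding indep_def by blast
  qed
  then have "(\<lambda>i. a * u i) = (\<lambda>i. 0)" using assms(2) by simp
  moreover have "u \<noteq> (\<lambda>i. 0)" using assms(1) indep_def by blast
  ultimately have "a = 0" by (metis mult_eq_0_iff)
  with b show ?thesis by simp
qed

lemma in_pt: "v \<in> pt v"
  unfolding pt_def by (rule CollectI, rule exI[of _ 1]) simp

lemma pt_sub_ln: "pt v \<subseteq> lin u w \<longleftrightarrow> v \<in> lin u w"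
proof
  assume "pt v \<subseteq> lin u w" then show "v \<in> lin u w" using in_pt by blast
next
  assume "v \<in> lin u w"
  then obtain a b where v: "v = (\<lambda>i. a * u i + b * w i)" unfolding lin_def by blast
  show "pt v \<subseteq> lin u w"
  proof
    fix x assume "x \<in> pt v"
    then obtain c where "x = (\<lambda>i. c * v i)" unfolding pt_def by blast
    then have "x = (\<lambda>i. (c*a) * u i + (c*b) * w i)" using v by (simp add: algebra_simps)
    then show "x \<in> lin u w" unfolding lin_def by blast
  qed
qed

lemma pt_eq:
  assumes "x \<in> pt v" "x \<noteq> (\<lambda>i. 0)"
  shows "pt x = pt v"
proof -
  obtain c where x: "x = (\<lambda>i. c * v i)" using assms(1) unfolding pt_def by blast
  have c: "c \<noteq> 0" using assms(2) x by auto
  show ?thesis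
  proof
    show "pt x \<subseteq> pt v"
    proof
      fix y assume "y \<in> pt x"
      then obtain d where y: "y = (\<lambda>i. d * x i)" unfolding pt_def by blast
      have "y = (\<lambda>i. (d * c) * v i)" unfolding y x by (simp add: mult.assoc)
      then show "y \<in> pt v" unfolding pt_def by blast
    qed
    show "pt v \<subseteq> pt x"
    proof
      fix y assume "y \<in> pt v"
      then obtain d where y: "y = (\<lambda>i. d * v i)" unfolding pt_def by blast
      have "y = (\<lambda>i. (d / c) * x i)" using c unfolding x y by (simp add: fun_eq_iff)
      then show "y \<in> pt x" unfolding pt_def by blast
    qed
  qed
qed

lemma pt_ne_indep:
  assumes "x \<noteq> (\<lambda>i. 0)" "y \<noteq> (\<lambda>i. 0)" "pt x \<noteq> pt y"
  shows "indep x y"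
  unfolding indep_def
proof (intro conjI allI)
  show "x \<noteq> (\<lambda>i. 0)" by fact
  fix c show "y \<noteq> (\<lambda>i. c * x i)"
  proof
    assume "y = (\<lambda>i. c * x i)"
    then have "y \<in> pt x" unfolding pt_def by blast
    then have "pt y = pt x" using pt_eq assms(2) by blast
    then show False using assms(3) by simp
  qed
qed

lemma in_ln1: "x \<in> lin x y" unfolding lin_def by (rule CollectI, rule exI[of _ 1], rule exI[of _ 0]) simp
lemma in_ln2: "y \<in> lin x y" unfolding lin_def by (rule CollectI, rule exI[of _ 0], rule exI[of _ 1]) simp

lemma ln_sub:
  assumes "x \<in> lin u w" "y \<in> lin u w" shows "lin x y \<subseteq> lin u w"
proof
  obtain a1 b1 where x: "x = (\<lambda>i. a1 * u i + b1 * w i)" using assms(1) unfolding lin_def by blast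
  obtain a2 b2 where y: "y = (\<lambda>i. a2 * u i + b2 * w i)" using assms(2) unfolding lin_def by blast
  fix z assume "z \<in> lin x y"
  then obtain a b where z: "z = (\<lambda>i. a * x i + b * y i)" unfolding lin_def by blast
  have "z = (\<lambda>i. (a*a1 + b*a2) * u i + (a*b1+b*b2) * w i)" unfolding z x y by (simp add: algebra_simps)
  then show "z \<in> lin u w" unfolding lin_def by blast
qed

lemma ln_eq:
  assumes uw: "indep u w" and xy: "indep x y" and "x \<in> lin u w" "y \<in> lin u w"
  shows "lin x y = lin u w"
proof
  show "lin x y \<subseteq> lin u w" using ln_sub assms by blast
  obtain a1 b1 where x: "x = (\<lambda>i. a1 * u i + b1 * w i)" using assms(3) unfolding lin_def by blast
  obtain a2 b2 where y: "y = (\<lambda>i. a2 * u i + b2 * w i)" using assms(4) unfolding lin_def by blast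
  define d where "d = a1*b2 - a2*b1"
  have "(\<lambda>i. b2 * x i + (-b1) * y i) = (\<lambda>i. d * u i + 0 * w i)"
    unfolding x y d_def by (simp add: fun_eq_iff algebra_simps)
  have d: "d \<noteq> 0"
  proof
    assume d0: "d = 0"
    have "(\<lambda>i. b2 * x i + (-b1) * y i) = (\<lambda>i. 0)"
      unfolding x y using d0 unfolding d_def by (simp add: fun_eq_iff algebra_simps)
    then have "b2 = 0 \<and> -b1 = 0" using indep_lin[OF xy] by blast
    then have "b2 = 0 \<and> b1 = 0" by simp
    moreover have "(\<lambda>i. a2 * x i + (-a1) * y i) = (\<lambda>i. 0)"
      unfolding x y using d0 unfolding d_def by (simp add: fun_eq_iff algebra_simps)
    then have "a2 = 0 \<and> -a1 = 0" using indep_lin[OF xy] by blast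
    then have "a2 = 0 \<and> a1 = 0" by simp
    ultimately have "x = (\<lambda>i. 0)" unfolding x by simp
    then show False using xy indep_def by blast
  qed
  have u: "u = (\<lambda>i. (b2/d) * x i + (-b1/d) * y i)"
  proof
    fix i
    have "d * u i = b2 * x i - b1 * y i" unfolding x y d_def by (simp add: algebra_simps)
    then show "u i = (b2/d) * x i + (-b1/d) * y i" using d by (simp add: field_simps)
  qed
  have w: "w = (\<lambda>i. (-a2/d) * x i + (a1/d) * y i)"
  proof
    fix i
    have "d * w i = a1 * y i - a2 * x i" unfolding x y d_def by (simp add: algebra_simps)
    then show "w i = (-a2/d) * x i + (a1/d) * y i" using d by (simp add: field_simps)
  qed
  have "u \<in> lin x y" "w \<in> lin x y" unfolding lin_def by (subst u, blast) (subst w, blast)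
  then show "lin u w \<subseteq> lin x y" using ln_sub by blast
qed




lemma vecs_bij: "bij_betw (\<lambda>v. restrict v {..n}) (pg_vecs n) (PiE {..n} (\<lambda>_. UNIV::'a::field set))"
proof (rule bij_betw_imageI)
  show "inj_on (\<lambda>v. restrict v {..n}) (pg_vecs n)"
  proof (rule inj_onI)
    fix v w assume v: "v \<in> pg_vecs n" and w: "w \<in> pg_vecs n" and e: "restrict v {..n} = restrict w {..n}"
    show "v = w"
    proof
      fix i show "v i = w i"
      proof (cases "i \<le> n")
        case True then show ?thesis using e by (metis atMost_iff restrict_apply')
      next
        case False then show ?thesis using v w by (simp add: pg_vecs_def)
      qed
    qed
  qed
  show "(\<lambda>v. restrict v {..n}) ` pg_vecs n = PiE {..n} (\<lambda>_. UNIV)"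
  proof
    show "(\<lambda>v. restrict v {..n}) ` pg_vecs n \<subseteq> PiE {..n} (\<lambda>_. UNIV)" by (intro image_subsetI restrict_PiE) auto
    show "PiE {..n} (\<lambda>_. UNIV) \<subseteq> (\<lambda>v. restrict v {..n}) ` pg_vecs n"
      apply (rule subsetI)
      subgoal for g
        apply (rule image_eqI[where x="\<lambda>i. if i \<le> n then g i else 0"])
        by (auto simp: fun_eq_iff PiE_def extensional_def pg_vecs_def)
      done
  qed
qed

lemma vecs_card: "card (pg_vecs n :: (nat \<Rightarrow> 'a::{finite,field}) set) = CARD('a) ^ (Suc n)"
  and vecs_finite: "finite (pg_vecs n :: (nat \<Rightarrow> 'a::{finite,field}) set)"
proof -
  have "card (pg_vecs n :: (nat \<Rightarrow> 'a) set) = card (PiE {..n} (\<lambda>_. UNIV::'a set))"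
    using bij_betw_same_card[OF vecs_bij] .
  also have "\<dots> = CARD('a) ^ (Suc n)" by (simp add: card_PiE)
  finally show "card (pg_vecs n :: (nat \<Rightarrow> 'a) set) = CARD('a) ^ (Suc n)" .
  show "finite (pg_vecs n :: (nat \<Rightarrow> 'a) set)"
  proof -
    have "finite (PiE {..n} (\<lambda>_. UNIV::'a set))" by (rule finite_PiE) auto
    then show ?thesis using bij_betw_finite[OF vecs_bij] by blast
  qed
qed

lemma pt_sub_vecs: "v \<in> pg_vecs n \<Longrightarrow> pt v \<subseteq> pg_vecs n"
  by (auto simp: pt_def pg_vecs_def)
lemma ln_sub_vecs: "u \<in> pg_vecs n \<Longrightarrow> w \<in> pg_vecs n \<Longrightarrow> lin u w \<subseteq> pg_vecs n"
  by (auto simp: lin_def pg_vecs_def)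

lemma points_finite: "finite (pg_points n :: (nat \<Rightarrow> 'a::{finite,field}) set set)"
proof -
  have "pg_points n \<subseteq> Pow (pg_vecs n :: (nat \<Rightarrow> 'a) set)"
    unfolding pg_points_alt using pt_sub_vecs by blast
  then show ?thesis using vecs_finite finite_subset by blast
qed

lemma lines_finite: "finite (pg_lines n :: (nat \<Rightarrow> 'a::{finite,field}) set set)"
proof -
  have "pg_lines n \<subseteq> Pow (pg_vecs n :: (nat \<Rightarrow> 'a) set)"
    unfolding pg_lines_alt using ln_sub_vecs by blast
  then show ?thesis using vecs_finite finite_subset by blast
qed

lemma zero_in_pt: "(\<lambda>i. 0) \<in> pt v" unfolding pt_def by (rule CollectI, rule exI[of _ 0]) simp

lemma points_card: "card (pg_points n :: (nat \<Rightarrow> 'a::{finite,field}) set set) * (CARD('a) - 1) = CARD('a) ^ Suc n - 1"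
proof -
  let ?Z = "(\<lambda>i. 0) :: nat \<Rightarrow> 'a"
  let ?P = "pg_points n :: (nat \<Rightarrow> 'a) set set"
  have U: "pg_vecs n - {?Z} = (\<Union>P\<in>?P. P - {?Z})"
  proof
    show "pg_vecs n - {?Z} \<subseteq> (\<Union>P\<in>?P. P - {?Z})"
    proof
      fix x assume x: "x \<in> pg_vecs n - {?Z}"
      then have "pt x \<in> ?P" unfolding pg_points_alt by blast
      then show "x \<in> (\<Union>P\<in>?P. P - {?Z})" using x in_pt by blast
    qed
    show "(\<Union>P\<in>?P. P - {?Z}) \<subseteq> pg_vecs n - {?Z}" unfolding pg_points_alt using pt_sub_vecs by blast
  qed
  have fib: "card (P - {?Z}) = CARD('a) - 1" if P: "P \<in> ?P" for P
  proof -
    obtain v where v: "P = pt v" "v \<noteq> ?Z" using P unfolding pg_points_alt by blast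
    have "P - {?Z} = (\<lambda>c. (\<lambda>i. c * v i)) ` (UNIV - {0})"
    proof
      show "P - {?Z} \<subseteq> (\<lambda>c. (\<lambda>i. c * v i)) ` (UNIV - {0})"
        unfolding v pt_def by auto
      show "(\<lambda>c. (\<lambda>i. c * v i)) ` (UNIV - {0}) \<subseteq> P - {?Z}"
        using v(2) unfolding v pt_def by (auto simp: fun_eq_iff)
    qed
    moreover have "inj_on (\<lambda>c. (\<lambda>i. c * v i)) (UNIV - {0})"
    proof (rule inj_onI)
      fix c d assume "(\<lambda>i. c * v i) = (\<lambda>i. d * v i)"
      moreover obtain i where "v i \<noteq> 0" using v(2) by (auto simp: fun_eq_iff)
      ultimately show "c = d" by (metis mult_right_cancel)
    qed
    ultimately show ?thesis by (simp add: card_image card_Diff_singleton)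
  qed
  have disj: "(P - {?Z}) \<inter> (P' - {?Z}) = {}" if PP: "P \<in> ?P" "P' \<in> ?P" "P \<noteq> P'" for P P'
  proof (rule ccontr)
    assume "(P - {?Z}) \<inter> (P' - {?Z}) \<noteq> {}"
    then obtain x where x: "x \<in> P" "x \<in> P'" "x \<noteq> ?Z" by blast
    obtain v where v: "P = pt v" using PP(1) unfolding pg_points_alt by blast
    obtain v' where v': "P' = pt v'" using PP(2) unfolding pg_points_alt by blast
    have "pt x = P" "pt x = P'" using pt_eq x v v' by blast+
    then show False using PP(3) by simp
  qed
  have "card (pg_vecs n - {?Z}) = (\<Sum>P\<in>?P. card (P - {?Z}))"
    unfolding U
  proof (rule card_UN_disjoint)
    show "finite ?P" by (rule points_finite)
    show "\<forall>P\<in>?P. finite (P - {?Z})"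
    proof
      fix P assume "P \<in> ?P"
      then obtain v where "P = pt v" "v \<in> pg_vecs n" unfolding pg_points_alt by blast
      then have "P \<subseteq> pg_vecs n" using pt_sub_vecs by blast
      then show "finite (P - {?Z})" using vecs_finite finite_subset by blast
    qed
    show "\<forall>P\<in>?P. \<forall>P'\<in>?P. P \<noteq> P' \<longrightarrow> (P - {?Z}) \<inter> (P' - {?Z}) = {}" using disj by blast
  qed
  also have "\<dots> = card ?P * (CARD('a) - 1)" using fib by simp
  finally have "card ?P * (CARD('a) - 1) = card (pg_vecs n - {?Z})" by simp
  also have "\<dots> = CARD('a) ^ Suc n - 1"
  proof -
    have "?Z \<in> pg_vecs n" by (simp add: pg_vecs_def)
    then show ?thesis using vecs_card[where 'a='a] vecs_finite[where 'a='a] by (simp add: card_Diff_singleton)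
  qed
  finally show ?thesis .
qed




lemma line_points:
  assumes L: "L \<in> (pg_lines n :: (nat \<Rightarrow> 'a::{finite,field}) set set)"
  shows "card {P\<in>pg_points n. P \<subseteq> L} = CARD('a) + 1"
proof -
  obtain u w where uw: "L = lin u w" "u \<in> pg_vecs n" "w \<in> pg_vecs n" "indep u w"
    using L unfolding pg_lines_alt by blast
  define g :: "'a option \<Rightarrow> (nat \<Rightarrow> 'a) set" where
    "g x = (case x of None \<Rightarrow> pt w | Some t \<Rightarrow> pt (\<lambda>i. u i + t * w i))" for x
  have w0: "w \<noteq> (\<lambda>i. 0)"
  proof
    assume "w = (\<lambda>i. 0)"
    then have "(\<lambda>i. 0 * u i + 1 * w i) = (\<lambda>i. 0)" by simp
    then show False using indep_lin[OF uw(4)] one_neq_zero by metis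
  qed
  have ut0: "(\<lambda>i. u i + t * w i) \<noteq> (\<lambda>i. 0)" for t
  proof
    assume "(\<lambda>i. u i + t * w i) = (\<lambda>i. 0)"
    then have "(\<lambda>i. 1 * u i + t * w i) = (\<lambda>i. 0)" by simp
    then show False using indep_lin[OF uw(4)] one_neq_zero by metis
  qed
  have utL: "(\<lambda>i. u i + t * w i) \<in> lin u w" for t
    unfolding lin_def by (rule CollectI, rule exI[of _ 1], rule exI[of _ t]) simp
  have utV: "(\<lambda>i. u i + t * w i) \<in> pg_vecs n" for t using uw(2,3) by (simp add: pg_vecs_def)
  have "{P\<in>pg_points n. P \<subseteq> L} = range g"
  proof
    show "range g \<subseteq> {P\<in>pg_points n. P \<subseteq> L}"
    proof
      fix P assume "P \<in> range g"
      then obtain x where P: "P = g x" by blast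
      show "P \<in> {P\<in>pg_points n. P \<subseteq> L}"
      proof (cases x)
        case None
        then have "P = pt w" using P g_def by simp
        then show ?thesis using w0 uw in_ln2 pt_sub_ln unfolding pg_points_alt by blast
      next
        case (Some t)
        then have "P = pt (\<lambda>i. u i + t * w i)" using P g_def by simp
        then show ?thesis using ut0 utL utV uw pt_sub_ln unfolding pg_points_alt by blast
      qed
    qed
    show "{P\<in>pg_points n. P \<subseteq> L} \<subseteq> range g"
    proof
      fix P assume "P \<in> {P\<in>pg_points n. P \<subseteq> L}"
      then obtain v where v: "P = pt v" "v \<in> pg_vecs n" "v \<noteq> (\<lambda>i. 0)" "P \<subseteq> L" unfolding pg_points_alt by blast
      then have "v \<in> lin u w" using pt_sub_ln uw(1) by blast
      then obtain a b where vab: "v = (\<lambda>i. a * u i + b * w i)" unfolding lin_def by blast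
      show "P \<in> range g"
      proof (cases "a = 0")
        case True
        then have "v \<in> pt w" unfolding vab pt_def by auto
        then have "P = pt w" using pt_eq v by blast
        then have "P = g None" unfolding g_def by simp
        then show ?thesis by blast
      next
        case False
        have "v = (\<lambda>i. a * (u i + (b/a) * w i))" unfolding vab using False by (simp add: fun_eq_iff field_simps)
        then have "v \<in> pt (\<lambda>i. u i + (b/a) * w i)" unfolding pt_def by blast
        then have "P = pt (\<lambda>i. u i + (b/a) * w i)" using pt_eq v by blast
        then have "P = g (Some (b/a))" unfolding g_def by simp
        then show ?thesis by blast
      qed
    qed
  qed
  moreover have "inj g"
  proof (rule injI)
    fix x y assume e: "g x = g y"
    have noneSome: False if "pt w = pt (\<lambda>i. u i + t * w i)" for t
    proof -
      have "(\<lambda>i. u i + t * w i) \<in> pt w" using that in_pt by metis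
      then obtain c where "(\<lambda>i. u i + t * w i) = (\<lambda>i. c * w i)" unfolding pt_def by blast
      then have "(\<lambda>i. 1 * u i + (t - c) * w i) = (\<lambda>i. 0)" by (simp add: fun_eq_iff algebra_simps)
      then show False using indep_lin[OF uw(4)] one_neq_zero by metis
    qed
    have someSome: "t = t'" if "pt (\<lambda>i. u i + t * w i) = pt (\<lambda>i. u i + t' * w i)" for t t'
    proof -
      have "(\<lambda>i. u i + t' * w i) \<in> pt (\<lambda>i. u i + t * w i)" using that in_pt by metis
      then obtain c where "(\<lambda>i. u i + t' * w i) = (\<lambda>i. c * (u i + t * w i))" unfolding pt_def by blast
      then have "(\<lambda>i. (1 - c) * u i + (t' - c * t) * w i) = (\<lambda>i. 0)" by (simp add: fun_eq_iff algebra_simps)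
      then have "1 - c = 0 \<and> t' - c * t = 0" using indep_lin[OF uw(4)] by blast
      then show "t = t'" by simp
    qed
    show "x = y"
    proof (cases x; cases y)
      fix t t' assume "x = Some t" "y = Some t'" then show "x = y" using e someSome unfolding g_def by simp
    next
      fix t assume xy: "x = None" "y = Some t"
      have "pt w = pt (\<lambda>i. u i + t * w i)" using e xy unfolding g_def by simp
      then show "x = y" using noneSome by blast
    next
      fix t assume xy: "x = Some t" "y = None"
      have "pt w = pt (\<lambda>i. u i + t * w i)" using e xy unfolding g_def by simp
      then show "x = y" using noneSome by blast
    qed simp
  qed
  ultimately show ?thesis by (simp add: card_image)
qed

lemma two_points_line:
  assumes P: "P \<in> (pg_points n :: (nat \<Rightarrow> 'a::{finite,field}) set set)" and Q: "Q \<in> pg_points n" and PQ: "P \<noteq> Q"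
  shows "card {L\<in>pg_lines n. P \<subseteq> L \<and> Q \<subseteq> L} = 1"
proof -
  obtain x where x: "P = pt x" "x \<in> pg_vecs n" "x \<noteq> (\<lambda>i. 0)" using P unfolding pg_points_alt by blast
  obtain y where y: "Q = pt y" "y \<in> pg_vecs n" "y \<noteq> (\<lambda>i. 0)" using Q unfolding pg_points_alt by blast
  have xy: "indep x y" using pt_ne_indep x y PQ by blast
  have "{L\<in>pg_lines n. P \<subseteq> L \<and> Q \<subseteq> L} = {lin x y}"
  proof
    show "{lin x y} \<subseteq> {L\<in>pg_lines n. P \<subseteq> L \<and> Q \<subseteq> L}"
      using xy x y in_ln1 in_ln2 pt_sub_ln unfolding pg_lines_alt by blast
    show "{L\<in>pg_lines n. P \<subseteq> L \<and> Q \<subseteq> L} \<subseteq> {lin x y}"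
    proof
      fix L assume "L \<in> {L\<in>pg_lines n. P \<subseteq> L \<and> Q \<subseteq> L}"
      then obtain u w where L: "L = lin u w" "indep u w" "P \<subseteq> L" "Q \<subseteq> L" unfolding pg_lines_alt by blast
      have "x \<in> lin u w" "y \<in> lin u w" using L x y pt_sub_ln by blast+
      then have "lin x y = L" using ln_eq L xy by blast
      then show "L \<in> {lin x y}" by simp
    qed
  qed
  then show ?thesis by simp
qed




lemma double_count:
  assumes "finite A" "finite C"
  shows "(\<Sum>a\<in>A. card {c\<in>C. R a c}) = (\<Sum>c\<in>C. card {a\<in>A. R a c})"
proof -
  have "(\<Sum>a\<in>A. card {c\<in>C. R a c}) = (\<Sum>a\<in>A. \<Sum>c\<in>C. if R a c then 1 else 0)"
    using assms by (simp add: sum.inter_filter[symmetric])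
  also have "\<dots> = (\<Sum>c\<in>C. \<Sum>a\<in>A. if R a c then 1 else 0)" by (rule sum.swap)
  also have "\<dots> = (\<Sum>c\<in>C. card {a\<in>A. R a c})"
    using assms by (simp add: sum.inter_filter[symmetric])
  finally show ?thesis .
qed

lemma card_offdiag:
  assumes "finite X"
  shows "card {pq\<in>X\<times>X. fst pq \<noteq> snd pq} = card X * (card X - 1)"
proof -
  have e: "{pq\<in>X\<times>X. fst pq \<noteq> snd pq} = X\<times>X - (\<lambda>a. (a,a)) ` X" by auto
  have "card ((\<lambda>a. (a,a)) ` X) = card X" by (rule card_image) (auto simp: inj_on_def)
  moreover have "(\<lambda>a. (a,a)) ` X \<subseteq> X\<times>X" by auto
  ultimately have "card {pq\<in>X\<times>X. fst pq \<noteq> snd pq} = card X * card X - card X"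
    unfolding e using assms by (simp add: card_Diff_subset card_cartesian_product finite_subset)
  thus ?thesis by (simp add: diff_mult_distrib2)
qed

locale incid =
  fixes Pts :: "'p set" and Ls :: "'l set" and I :: "'p \<Rightarrow> 'l \<Rightarrow> bool" and q :: nat
  assumes fP: "finite Pts" and fL: "finite Ls"
    and lp: "\<And>L. L\<in>Ls \<Longrightarrow> card {P\<in>Pts. I P L} = q+1"
    and uq: "\<And>P Q. P\<in>Pts \<Longrightarrow> Q\<in>Pts \<Longrightarrow> P \<noteq> Q \<Longrightarrow> card {L\<in>Ls. I P L \<and> I Q L} = 1"
begin

lemma kq: assumes P: "P \<in> Pts" shows "card {L\<in>Ls. I P L} * q = card Pts - 1"
proof -
  let ?LP = "{L\<in>Ls. I P L}"
  have "(\<Sum>L\<in>?LP. card {Q\<in>Pts-{P}. I Q L}) = (\<Sum>Q\<in>Pts-{P}. card {L\<in>?LP. I Q L})"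
    by (rule double_count) (use fL fP in auto)
  also have "\<dots> = (\<Sum>Q\<in>Pts-{P}. 1)"
  proof (rule sum.cong[OF refl])
    fix Q assume "Q \<in> Pts - {P}"
    then have "card {L\<in>Ls. I P L \<and> I Q L} = 1" using uq[of P Q] P by auto
    moreover have "{L\<in>?LP. I Q L} = {L\<in>Ls. I P L \<and> I Q L}" by auto
    ultimately show "card {L\<in>?LP. I Q L} = 1" by simp
  qed
  also have "\<dots> = card Pts - 1" using P fP by simp
  finally have s: "(\<Sum>L\<in>?LP. card {Q\<in>Pts-{P}. I Q L}) = card Pts - 1" .
  have "(\<Sum>L\<in>?LP. card {Q\<in>Pts-{P}. I Q L}) = (\<Sum>L\<in>?LP. q)"
  proof (rule sum.cong[OF refl])
    fix L assume L: "L \<in> ?LP"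
    have "{Q\<in>Pts-{P}. I Q L} = {Q\<in>Pts. I Q L} - {P}" by auto
    moreover have "P \<in> {Q\<in>Pts. I Q L}" using L P by auto
    moreover have "finite {Q\<in>Pts. I Q L}" using fP by auto
    ultimately show "card {Q\<in>Pts-{P}. I Q L} = q" using lp[of L] L by simp
  qed
  then show ?thesis using s by simp
qed

definition "k = (card Pts - 1) div q"

lemma kP: assumes "P \<in> Pts" "q \<ge> 1" shows "card {L\<in>Ls. I P L} = k"
  using kq[OF assms(1)] assms(2) unfolding k_def by (metis div_mult_self_is_m less_le_trans zero_less_one)

lemma sL: assumes "q \<ge> 1" shows "card Ls * (q+1) = card Pts * k"
proof -
  have "card Ls * (q+1) = (\<Sum>L\<in>Ls. card {P\<in>Pts. I P L})" using lp by simp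
  also have "\<dots> = (\<Sum>P\<in>Pts. card {L\<in>Ls. I P L})" by (rule double_count[OF fL fP])
  also have "\<dots> = card Pts * k" using kP assms by simp
  finally show ?thesis .
qed

lemma S1: assumes "B \<subseteq> Pts" "q \<ge> 1" shows "(\<Sum>L\<in>Ls. card {P\<in>B. I P L}) = card B * k"
proof -
  have fB: "finite B" using assms fP finite_subset by blast
  have "(\<Sum>L\<in>Ls. card {P\<in>B. I P L}) = (\<Sum>P\<in>B. card {L\<in>Ls. I P L})" by (rule double_count[OF fL fB])
  also have "\<dots> = card B * k" using kP assms by (simp add: subset_iff)
  finally show ?thesis .
qed

lemma S2: assumes "B \<subseteq> Pts"
  shows "(\<Sum>L\<in>Ls. card {P\<in>B. I P L} * (card {P\<in>B. I P L} - 1)) = card B * (card B - 1)"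
proof -
  have fB: "finite B" using assms fP finite_subset by blast
  let ?O = "{pq\<in>B\<times>B. fst pq \<noteq> snd pq}"
  have fO: "finite ?O" using fB by simp
  have "(\<Sum>L\<in>Ls. card {P\<in>B. I P L} * (card {P\<in>B. I P L} - 1)) = (\<Sum>L\<in>Ls. card {pq\<in>?O. I (fst pq) L \<and> I (snd pq) L})"
  proof (rule sum.cong[OF refl])
    fix L
    have "{pq\<in>?O. I (fst pq) L \<and> I (snd pq) L} = {pq\<in>{P\<in>B. I P L}\<times>{P\<in>B. I P L}. fst pq \<noteq> snd pq}" by auto
    then show "card {P\<in>B. I P L} * (card {P\<in>B. I P L} - 1) = card {pq\<in>?O. I (fst pq) L \<and> I (snd pq) L}"
      using card_offdiag[of "{P\<in>B. I P L}"] fB by simp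
  qed
  also have "\<dots> = (\<Sum>pq\<in>?O. card {L\<in>Ls. I (fst pq) L \<and> I (snd pq) L})" by (rule double_count[OF fL fO])
  also have "\<dots> = (\<Sum>pq\<in>?O. 1)"
  proof (rule sum.cong[OF refl])
    fix pq assume pq: "pq \<in> ?O"
    then have "fst pq \<in> Pts" "snd pq \<in> Pts" "fst pq \<noteq> snd pq" using assms by auto
    then show "card {L\<in>Ls. I (fst pq) L \<and> I (snd pq) L} = 1" by (rule uq)
  qed
  also have "\<dots> = card B * (card B - 1)" using card_offdiag[OF fB] by simp
  finally show ?thesis .
qed

end



lemma alg2:
  fixes q Q m b k c :: real
  assumes m4: "4 \<le> m" and mq: "m \<le> q" and qQ: "q \<le> Q" and bQ: "b < 2*Q"
    and kdef: "(q-1)*k = q*Q - 1" and cdef: "(q*q-1)*c = q*q*Q - 1"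
    and main: "b*(b-1) \<ge> (1+m)*k*(b - c)"
  shows "b \<le> Q + 2*Q/m"
proof (rule ccontr)
  assume nb: "\<not> b \<le> Q + 2*Q/m"
  define b0 where "b0 = Q + 2*Q/m"
  define d where "d = k - Q"
  define d' where "d' = c - Q"
  have mpos: "m > 0" and q1: "q > 1" and Q1: "Q \<ge> 1" and Qpos: "Q > 0" using m4 mq qQ by auto
  have "q*q > 1" using q1 by (metis less_1_mult)
  then have qq: "q*q - 1 > 0" by simp
  have dq: "(q-1)*d = Q - 1" unfolding d_def using kdef by (simp add: algebra_simps)
  have "(q-1)*d \<ge> 0" using dq Q1 by simp
  then have dge: "d \<ge> 0" using q1 by (simp add: zero_le_mult_iff)
  have dle: "d \<le> Q/(q-1)" using dq q1 Q1 by (simp add: field_simps)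
  have dq': "(q*q-1)*d' = Q - 1" unfolding d'_def using cdef by (simp add: algebra_simps)
  have dd': "(q+1)*d' = d"
  proof -
    have "(q-1)*((q+1)*d') = (q-1)*d" using dq dq' by (simp add: algebra_simps)
    then show ?thesis using q1 by simp
  qed
  have bb0: "b0 < b" using nb unfolding b0_def by simp
  have c2: "2*Q - c \<ge> 4*Q/5"
  proof -
    have "(q*q-1)*(2*Q - c - 4*Q/5) = (q*q-1)*(6*Q/5) - (q*q-1)*c" by (simp add: algebra_simps)
    also have "\<dots> = (q*q-1)*(6*Q/5) - (q*q*Q - 1)" using cdef by simp
    also have "\<dots> = Q*(q*q/5 - 6/5) + 1" by (simp add: field_simps)
    finally have "(q*q-1)*(2*Q - c - 4*Q/5) = Q*(q*q/5 - 6/5) + 1" .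
    moreover have "4*4 \<le> q*q" using m4 mq by (intro mult_mono) auto
    ultimately have "(q*q-1)*(2*Q - c - 4*Q/5) \<ge> 0" using Qpos by simp
    then show ?thesis using qq by (simp add: zero_le_mult_iff)
  qed
  have E1: "(1+m)*k*(2*Q - c) \<ge> 2*Q*(2*Q-1)"
  proof -
    have "k \<ge> Q" using dge unfolding d_def by simp
    have "(1+m)*k*(2*Q - c) \<ge> 5*Q*(4*Q/5)"
      using m4 \<open>k \<ge> Q\<close> c2 Qpos by (intro mult_mono) auto
    then show ?thesis using Qpos by (simp add: algebra_simps)
  qed
  have E0: "(1+m)*k*(b0 - c) > b0*(b0-1)"
  proof -
    define t where "t = 2*Q/m"
    have l0: "(1+m)*k*(b0 - c) = (1+m)*(Q*t + d*(t - d') - Q*d')"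
    proof -
      have e: "k = Q + d" "b0 - c = t - d'" unfolding d_def d'_def t_def b0_def by simp_all
      have "(1+m)*k*(b0 - c) = (1+m)*((Q + d)*(t - d'))" unfolding e by simp
      also have "\<dots> = (1+m)*(Q*t + d*(t - d') - Q*d')" by (simp add: algebra_simps)
      finally show ?thesis .
    qed
    have "Q*d' = d*(Q/(q+1))" using dd' q1 by (simp add: field_simps)
    then have l: "(1+m)*k*(b0 - c) = (1+m)*(2*Q*Q/m + d*(2*Q/m - d' - Q/(q+1)))"
      unfolding l0 t_def by (simp add: algebra_simps)
    have "(d + Q)/(q+1) \<le> 2*Q/m"
    proof -
      have "d + Q \<le> Q*q/(q-1)" using dle q1 by (simp add: field_simps)
      then have "(d + Q)/(q+1) \<le> (Q*q/(q-1))/(q+1)" using q1 by (intro divide_right_mono) auto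
      then have "(d + Q)/(q+1) \<le> Q*q/((q-1)*(q+1))" by (simp add: divide_divide_eq_left)
      also have "\<dots> \<le> 2*Q/q"
      proof -
        have "4*4 \<le> q*q" using m4 mq by (intro mult_mono) auto
        then have "Q*(q*q) \<le> Q*(2*(q*q) - 2)" using Qpos by (intro mult_left_mono) auto
        then have "Q*q*q \<le> 2*Q*((q-1)*(q+1))" by (simp add: algebra_simps)
        then show ?thesis using q1 Qpos by (simp add: field_simps)
      qed
      also have "\<dots> \<le> 2*Q/m" using mq mpos Qpos by (simp add: frac_le)
      finally show ?thesis .
    qed
    moreover have "d' = d/(q+1)" using dd' q1 by (simp add: field_simps)
    ultimately have "2*Q/m - d' - Q/(q+1) \<ge> 0" by (simp add: add_divide_distrib)
    then have "d*(2*Q/m - d' - Q/(q+1)) \<ge> 0" using dge by simp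
    then have "2*Q*Q/m \<le> 2*Q*Q/m + d*(2*Q/m - d' - Q/(q+1))" by simp
    then have "(1+m)*(2*Q*Q/m) \<le> (1+m)*(2*Q*Q/m + d*(2*Q/m - d' - Q/(q+1)))" using m4 by (intro mult_left_mono) auto
    then have "(1+m)*k*(b0 - c) \<ge> (1+m)*(2*Q*Q/m)" unfolding l .
    moreover have "(1+m)*(2*Q*Q/m) > b0*b0"
    proof -
      have h1: "4*m \<le> m*m" using m4 by (intro mult_right_mono) auto
      have h2: "2*m*(1+m) - (m+2)*(m+2) = m*m - 2*m - 4" by (simp add: algebra_simps)
      have "m*m - 2*m - 4 > 0" using h1 m4 by linarith
      then have "2*m*(1+m) > (m+2)*(m+2)" using h2 by simp
      then have "2*m*(1+m)*(Q*Q) > (m+2)*(m+2)*(Q*Q)" using Qpos by simp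
      then have "2*m*(1+m)*(Q*Q)/(m*m) > (m+2)*(m+2)*(Q*Q)/(m*m)" using mpos by (intro divide_strict_right_mono) auto
      moreover have "b0*b0 = (m+2)*(m+2)*(Q*Q)/(m*m)" unfolding b0_def using mpos by (simp add: field_simps)
      moreover have "(1+m)*(2*Q*Q/m) = 2*m*(1+m)*(Q*Q)/(m*m)" using mpos by (simp add: field_simps)
      ultimately show ?thesis by simp
    qed
    moreover have "b0*b0 \<ge> b0*(b0-1)" using Qpos mpos unfolding b0_def by (simp add: mult_left_mono)
    ultimately show ?thesis by linarith
  qed
  have id1: "(2*Q - b0) * (b*(b-1)) = (2*Q-b)*(b0*(b0-1)) + (b-b0)*(2*Q*(2*Q-1)) - (b-b0)*(2*Q-b)*(2*Q-b0)"
    by (simp add: algebra_simps)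
  have id2: "(2*Q - b0) * ((1+m)*k*(b - c)) = (2*Q-b)*((1+m)*k*(b0 - c)) + (b-b0)*((1+m)*k*(2*Q - c))"
    by (simp add: algebra_simps)
  have pos: "(b-b0)*(2*Q-b)*(2*Q-b0) > 0" using bb0 bQ by simp
  have "(2*Q-b)*(b0*(b0-1)) \<le> (2*Q-b)*((1+m)*k*(b0 - c))" using E0 bQ by (simp add: mult_left_mono)
  moreover have "(b-b0)*(2*Q*(2*Q-1)) \<le> (b-b0)*((1+m)*k*(2*Q - c))" using E1 bb0 by (simp add: mult_left_mono)
  ultimately have "(2*Q - b0) * (b*(b-1)) < (2*Q - b0) * ((1+m)*k*(b - c))"
    using id1 id2 pos by linarith
  moreover have "2*Q - b0 > 0" using bb0 bQ by simp
  ultimately have "b*(b-1) < (1+m)*k*(b - c)" by simp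
  then show False using main by simp
qed



theorem theorem2:
  fixes B :: "(nat \<Rightarrow> 'a::{finite,field}) set set"
    and n p h e :: nat
  assumes "n \<ge> 2"
    and "prime p" and "h \<ge> 1" and "CARD('a) = p ^ h"
    and "minimal_blocking_set n B"
    and "lines_meet_one_mod n B (p ^ e)"
    and "\<forall>e'. lines_meet_one_mod n B (p ^ e') \<longrightarrow> e' \<le> e"
    and "p ^ e > 3"
    and "((real CARD('a)) ^ n - 1) / (real CARD('a) - 1) < real (card B)"
    and "card B < 2 * CARD('a) ^ (n - 1)"
  shows "real (card B) \<le> real CARD('a) ^ (n - 1) + 2 * real CARD('a) ^ (n - 1) / real p ^ e"
proof -
  note A = assms
  define q where "q = CARD('a)"
  define m where "m = p ^ e"
  define Pts where "Pts = (pg_points n :: (nat \<Rightarrow> 'a) set set)"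
  define Ls where "Ls = (pg_lines n :: (nat \<Rightarrow> 'a) set set)"
  define i where "i L = card {P\<in>B. P \<subseteq> L}" for L
  have p2: "p \<ge> 2" using A(2) prime_ge_2_nat by blast
  have q2: "q \<ge> 2"
  proof -
    have "p ^ 1 \<le> p ^ h" using A(3) p2 by (intro power_increasing) auto
    then show ?thesis using p2 A(4) unfolding q_def by simp
  qed
  have m4: "m \<ge> 4" using A(8) unfolding m_def by simp
  interpret incid Pts Ls "\<lambda>P L. P \<subseteq> L" q
  proof
    show "finite Pts" unfolding Pts_def by (rule points_finite)
    show "finite Ls" unfolding Ls_def by (rule lines_finite)
    show "card {P\<in>Pts. P \<subseteq> L} = q + 1" if "L \<in> Ls" for L
      using line_points that unfolding Pts_def Ls_def q_def by blast
    show "card {L\<in>Ls. P \<subseteq> L \<and> Q \<subseteq> L} = 1" if "P \<in> Pts" "Q \<in> Pts" "P \<noteq> Q" for P Q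
      using two_points_line that unfolding Pts_def Ls_def by blast
  qed
  have blk: "blocking_set n B" using A(5) minimal_blocking_set_def by blast
  have BP: "B \<subseteq> Pts" using blk unfolding blocking_set_def Pts_def by (rule conjunct1)
  have fB: "finite B" using BP fP finite_subset by blast
  have imod: "i L mod m = 1" if "L \<in> Ls" for L
  proof -
    have "i L mod m = 1 mod m" using A(6) that unfolding lines_meet_one_mod_def i_def m_def Ls_def by blast
    moreover have "1 mod m = 1" using m4 by simp
    ultimately show ?thesis by simp
  qed
  have ige1: "i L \<ge> 1" if "L \<in> Ls" for L
  proof -
    have "\<forall>L\<in>pg_lines n. \<exists>P\<in>B. P \<subseteq> L" using blk unfolding blocking_set_def by (rule conjunct2)
    then have "\<exists>P\<in>B. P \<subseteq> L" using that unfolding Ls_def by (rule bspec)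
    then obtain P where P: "P \<in> B" "P \<subseteq> L" by (elim bexE)
    then have "P \<in> {P\<in>B. P \<subseteq> L}" by simp
    then have "{P\<in>B. P \<subseteq> L} \<noteq> {}" by (metis empty_iff)
    then show ?thesis unfolding i_def using fB by (simp add: Suc_le_eq card_gt_0_iff)
  qed
  have ileq: "i L \<le> q + 1" if "L \<in> Ls" for L
  proof -
    have "{P\<in>B. P \<subseteq> L} \<subseteq> {P\<in>Pts. P \<subseteq> L}" using BP by blast
    then have "i L \<le> card {P\<in>Pts. P \<subseteq> L}" unfolding i_def using fP by (intro card_mono) auto
    then show ?thesis using lp that by simp
  qed
  have mq: "m \<le> q"
  proof -
    have "\<exists>L\<in>Ls. i L \<noteq> 1"
    proof (rule ccontr)
      assume "\<not> ?thesis"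
      then have "lines_meet_one_mod n B (p ^ Suc e)"
        unfolding lines_meet_one_mod_def i_def Ls_def by auto
      then show False using A(7) by fastforce
    qed
    then obtain L where L: "L \<in> Ls" "i L \<noteq> 1" by blast
    have im: "i L mod m = 1" using imod L by auto
    have "i L \<ge> m + 1"
    proof (rule ccontr)
      assume "\<not> i L \<ge> m + 1"
      then have "i L < m \<or> i L = m" by linarith
      then show False
      proof
        assume "i L < m" then have "i L mod m = i L" by simp
        then show False using im L(2) by simp
      next
        assume "i L = m" then show False using im m4 by simp
      qed
    qed
    then show ?thesis using ileq[OF L(1)] by simp
  qed
  have perL: "real (i L) * (real (i L) - 1) - (1 + real m) * real (i L) + (1 + real m) \<ge> 0" if "L \<in> Ls" for L
  proof -
    define t where "t = i L div m"
    have "i L = m * t + i L mod m" unfolding t_def by simp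
    then have t: "i L = m * t + 1" using imod[OF that] by simp
    have r: "real (i L) = 1 + real m * real t" using t by simp
    have "real t * (real t - 1) \<ge> 0" by (cases t) auto
    then have "real m * real m * (real t * (real t - 1)) \<ge> 0" by simp
    moreover have "real (i L) * (real (i L) - 1) - (1 + real m) * real (i L) + (1 + real m) = real m * real m * (real t * (real t - 1))"
      unfolding r by (simp add: algebra_simps)
    ultimately show ?thesis by simp
  qed
  have sum0: "(\<Sum>L\<in>Ls. real (i L) * (real (i L) - 1) - (1 + real m) * real (i L) + (1 + real m)) \<ge> 0"
    using perL by (intro sum_nonneg) auto
  have s2: "(\<Sum>L\<in>Ls. real (i L) * (real (i L) - 1)) = real (card B) * (real (card B) - 1)"
  proof -
    have "(\<Sum>L\<in>Ls. real (i L) * (real (i L) - 1)) = (\<Sum>L\<in>Ls. real (i L * (i L - 1)))"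
      by (rule sum.cong[OF refl]) (use ige1 in \<open>simp add: of_nat_diff\<close>)
    also have "\<dots> = real (\<Sum>L\<in>Ls. i L * (i L - 1))" by (simp only: of_nat_sum)
    also have "(\<Sum>L\<in>Ls. i L * (i L - 1)) = card B * (card B - 1)" unfolding i_def by (rule S2[OF BP])
    also have "\<dots> = real (card B) * (real (card B) - 1)"
      by (cases "card B") (simp_all add: algebra_simps)
    finally show ?thesis .
  qed
  have s1: "(\<Sum>L\<in>Ls. real (i L)) = real (card B) * real k"
  proof -
    have "(\<Sum>L\<in>Ls. i L) = card B * k" using S1[OF BP] q2 unfolding i_def by simp
    then have "real (\<Sum>L\<in>Ls. i L) = real (card B * k)" by simp
    then show ?thesis by simp
  qed
  have main: "real (card B) * (real (card B) - 1) - (1 + real m) * (real (card B) * real k) + (1 + real m) * real (card Ls) \<ge> 0"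
    using sum0 unfolding sum.distrib sum_subtractf sum_distrib_left[symmetric] s1 s2 by (simp add: algebra_simps)
  define N where "N = card Pts"
  have Nq: "real N * (real q - 1) = real q ^ Suc n - 1"
  proof -
    have "N * (q - 1) = q ^ Suc n - 1" using points_card unfolding N_def Pts_def q_def by blast
    moreover have "q ^ Suc n \<ge> 1" using q2 by simp
    ultimately have "real (N * (q - 1)) = real q ^ Suc n - 1" by (simp add: of_nat_diff)
    then show ?thesis using q2 by (simp add: of_nat_diff)
  qed
  have N1: "N \<ge> 1"
  proof (rule ccontr)
    assume "\<not> N \<ge> 1" then have "N = 0" by simp
    then have "real q ^ Suc n = 1" using Nq by simp
    moreover have "real q ^ Suc n \<ge> real q ^ 1" using q2 by (intro power_increasing) auto
    ultimately show False using q2 by simp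
  qed
  have P0: "Pts \<noteq> {}" using N1 unfolding N_def by auto
  then obtain P0 where P0': "P0 \<in> Pts" by blast
  have kqr: "real k * real q = real N - 1"
    using kq[OF P0'] kP[OF P0'] q2 N1 unfolding N_def by (simp add: of_nat_diff flip: of_nat_mult)
  have sLr: "real (card Ls) * (real q + 1) = real N * real k"
  proof -
    have "card Ls * (q + 1) = N * k" using sL q2 unfolding N_def by simp
    then have "real (card Ls * (q + 1)) = real (N * k)" by simp
    then show ?thesis by (simp add: algebra_simps)
  qed
  define Q where "Q = real q ^ (n - 1)"
  have qsn: "real q ^ Suc n = real q * real q * Q"
  proof -
    have "Suc n = 2 + (n - 1)" using A(1) by simp
    then have "real q ^ Suc n = real q ^ 2 * real q ^ (n - 1)" by (metis power_add)
    then show ?thesis unfolding Q_def by (simp add: power2_eq_square)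
  qed
  have qpos: "real q > 1" using q2 by simp
  have kQ: "(real q - 1) * real k = real q * Q - 1"
  proof -
    have "real q * ((real q - 1) * real k) = (real q - 1) * (real k * real q)" by (simp add: algebra_simps)
    also have "\<dots> = (real q - 1) * (real N - 1)" using kqr by simp
    also have "\<dots> = real N * (real q - 1) - (real q - 1)" by (simp add: algebra_simps)
    also have "\<dots> = real q * real q * Q - 1 - (real q - 1)" using Nq qsn by simp
    also have "\<dots> = real q * (real q * Q - 1)" by (simp add: algebra_simps)
    finally have "real q * ((real q - 1) * real k) = real q * (real q * Q - 1)" .
    then show ?thesis using qpos by simp
  qed
  define c where "c = real N / (real q + 1)"
  have sc: "real (card Ls) = real k * c" unfolding c_def using sLr qpos by (simp add: field_simps)
  have main2: "real (card B) * (real (card B) - 1) \<ge> (1 + real m) * real k * (real (card B) - c)"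
    using main unfolding sc by (simp add: algebra_simps)
  have cdef: "(real q * real q - 1) * c = real q * real q * Q - 1"
  proof -
    have "(real q * real q - 1) * c = (real q - 1) * real N" unfolding c_def using qpos by (simp add: field_simps)
    also have "\<dots> = real N * (real q - 1)" by (simp add: algebra_simps)
    also have "\<dots> = real q ^ Suc n - 1" by (rule Nq)
    also have "\<dots> = real q * real q * Q - 1" using qsn by simp
    finally show ?thesis .
  qed
  have qQ: "real q \<le> Q"
  proof -
    have "real q ^ 1 \<le> real q ^ (n - 1)" using A(1) qpos by (intro power_increasing) auto
    then show ?thesis unfolding Q_def by simp
  qed
  have bQ: "real (card B) < 2 * Q"
  proof -
    have "real (card B) < real (2 * q ^ (n - 1))" using A(10) unfolding q_def by linarith
    then show ?thesis unfolding Q_def by simp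
  qed
  have "real (card B) \<le> Q + 2 * Q / real m"
    by (rule alg2[OF _ _ qQ bQ kQ cdef main2]) (use m4 mq in auto)
  then show ?thesis unfolding Q_def q_def m_def by simp
qed


end
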